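(* Let $N\geq 2$ and let $\Sigma$ be the one-sided shift on $\{0,1,\dots,N-1\}^{\mathbb{N}_0}$, ordered lexicographically. Then $\Sigma$ has no forbidden order patterns of length $L\leq N+1$: for every $L\leq N+1$ and every $\pi\in\mathcal{S}_L$ there is $\omega\in\{0,1,\dots,N-1\}^{\mathbb{N}_0}$ that defines $\pi$.
   Context: $\{0,1,\dots,N-1\}^{\mathbb{N}_0}$ is the set of sequences $\omega=(\omega_0,\omega_1,\dots)$ with $\omega_n\in\{0,\dots,N-1\}$, and $\Sigma(\omega_0,\omega_1,\omega_2,\dots)=(\omega_1,\omega_2,\dots)$. The lexicographic order: $\omega<\omega'$ iff $\omega_0<\omega'_0$, or there is $n\geq1$ with $\omega_k=\omega'_k$ for $k<n$ and $\omega_n<\omega'_n$. $\mathcal{S}_L$ is the set of permutations $\pi=[\pi_0,\dots,\pi_{L-1}]$ of $\{0,\dots,L-1\}$. A sequence $\omega$ defines $\pi$ if $\Sigma^{\pi_0}(\omega)<\Sigma^{\pi_1}(\omega)<\dots<\Sigma^{\pi_{L-1}}(\omega)$. A pattern $\pi\in\mathcal{S}_L$ is forbidden for $\Sigma$ if no $\omega$ defines it. *)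

theory Defs
  imports Main
begin

definition seq_space :: "nat \<Rightarrow> (nat \<Rightarrow> nat) set" where
  "seq_space N = {\<omega>. \<forall>n. \<omega> n < N}"

definition shift :: "(nat \<Rightarrow> nat) \<Rightarrow> (nat \<Rightarrow> nat)" where
  "shift \<omega> = (\<lambda>n. \<omega> (Suc n))"

definition lex_less :: "(nat \<Rightarrow> nat) \<Rightarrow> (nat \<Rightarrow> nat) \<Rightarrow> bool" where
  "lex_less \<omega> \<omega>' \<longleftrightarrow> (\<exists>n. (\<forall>k<n. \<omega> k = \<omega>' k) \<and> \<omega> n < \<omega>' n)"

definition perms :: "nat \<Rightarrow> nat list set" where
  "perms L = {\<pi>. length \<pi> = L \<and> distinct \<pi> \<and> set \<pi> = {0..<L}}"

definition defines_pattern :: "(nat \<Rightarrow> nat) \<Rightarrow> nat list \<Rightarrow> bool" where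
  "defines_pattern \<omega> \<pi> \<longleftrightarrow>
     (\<forall>i. Suc i < length \<pi> \<longrightarrow> lex_less ((shift ^^ (\<pi> ! i)) \<omega>) ((shift ^^ (\<pi> ! Suc i)) \<omega>))"

definition forbidden :: "nat \<Rightarrow> nat list \<Rightarrow> bool" where
  "forbidden N \<pi> \<longleftrightarrow> \<not> (\<exists>\<omega>\<in>seq_space N. defines_pattern \<omega> \<pi>)"

end

theory Submission
  imports Defs
begin

lemma shift_pow: "(shift ^^ a) w = (\<lambda>n. w (a + n))"
  by (induction a) (auto simp: shift_def)

lemma lex_step:
  assumes "w a = w b" "lex_less ((shift^^Suc a) w) ((shift^^Suc b) w)"
  shows "lex_less ((shift^^a) w) ((shift^^b) w)"
proof -
  from assms(2) obtain n where n: "\<forall>k<n. w (Suc a + k) = w (Suc b + k)" "w (Suc a + n) < w (Suc b + n)"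
    unfolding lex_less_def shift_pow by auto
  have "\<forall>k<Suc n. w (a + k) = w (b + k)"
  proof (intro allI impI)
    fix k assume "k < Suc n" then show "w (a + k) = w (b + k)"
      using n assms(1) by (cases k) auto
  qed
  moreover have "w (a + Suc n) < w (b + Suc n)" using n by simp
  ultimately show ?thesis unfolding lex_less_def shift_pow by blast
qed

lemma lex_head: "w a < w b \<Longrightarrow> lex_less ((shift^^a) w) ((shift^^b) w)"
  unfolding lex_less_def shift_pow by (rule exI[of _ 0]) auto

lemma lex_zero_tail:
  assumes "\<forall>m\<ge>a. w m = 0" "w (b + n) \<noteq> 0"
  shows "lex_less ((shift^^a) w) ((shift^^b) w)"
proof -
  define n0 where "n0 = (LEAST n. w (b + n) \<noteq> 0)"
  have h: "w (b + n0) \<noteq> 0" unfolding n0_def by (rule LeastI[of _ n]) (rule assms(2))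
  have "\<forall>k<n0. w (a + k) = w (b + k)"
    using assms(1) not_less_Least[where P="\<lambda>n. w (b + n) \<noteq> 0"] unfolding n0_def by auto
  moreover have "w (a + n0) < w (b + n0)" using assms(1) h by simp
  ultimately show ?thesis unfolding lex_less_def shift_pow by blast
qed

lemma lex_max_tail:
  assumes "\<forall>m\<ge>b. w m = c" "w (a + n) < c" "\<forall>m. w m \<le> c"
  shows "lex_less ((shift^^a) w) ((shift^^b) w)"
proof -
  define n0 where "n0 = (LEAST n. w (a + n) \<noteq> c)"
  have h: "w (a + n0) \<noteq> c" unfolding n0_def by (rule LeastI[of _ n]) (use assms(2) in simp)
  have "\<forall>k<n0. w (a + k) = w (b + k)"
    using assms(1) not_less_Least[where P="\<lambda>n. w (a + n) \<noteq> c"] unfolding n0_def by auto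
  moreover have "w (a + n0) < w (b + n0)" using assms(1,3) h
    by (metis le_add1 le_neq_implies_less)
  ultimately show ?thesis unfolding lex_less_def shift_pow by blast
qed

definition rk :: "nat list \<Rightarrow> nat \<Rightarrow> nat" where
  "rk \<pi> m = (LEAST t. t < length \<pi> \<and> \<pi> ! t = m)"

lemma rk_nth: "distinct \<pi> \<Longrightarrow> t < length \<pi> \<Longrightarrow> rk \<pi> (\<pi> ! t) = t"
  unfolding rk_def
  by (rule Least_equality) (auto simp: nth_eq_iff_index_eq leI)

lemma rk_lt:
  assumes "\<pi> \<in> perms L" "m < L"
  shows "rk \<pi> m < L \<and> \<pi> ! (rk \<pi> m) = m"
proof -
  from assms have "m \<in> set \<pi>" by (auto simp: perms_def)
  then obtain t where t: "t < length \<pi>" "\<pi> ! t = m" by (auto simp: in_set_conv_nth)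
  then show ?thesis using assms rk_nth[of \<pi> t] by (auto simp: perms_def)
qed

definition wv :: "nat \<Rightarrow> nat \<Rightarrow> nat list \<Rightarrow> nat \<Rightarrow> nat \<Rightarrow> nat" where
  "wv k L \<pi> c m = (if m < L then (if rk \<pi> m \<le> k then rk \<pi> m else rk \<pi> m - 1) else c)"

lemma wv_nth: "\<pi> \<in> perms L \<Longrightarrow> t < L \<Longrightarrow> wv k L \<pi> c (\<pi> ! t) = (if t \<le> k then t else t - 1)"
  unfolding wv_def using rk_nth[of \<pi> t] nth_mem[of t \<pi>]
  by (auto simp: perms_def)

lemma wv_rk: "\<pi> \<in> perms L \<Longrightarrow> m < L \<Longrightarrow> wv k L \<pi> c m = (if rk \<pi> m \<le> k then rk \<pi> m else rk \<pi> m - 1)"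
  unfolding wv_def by simp

lemma realize:
  assumes "\<pi> \<in> perms L" "\<forall>m. w m < N"
    "\<forall>t. Suc t < L \<longrightarrow> t \<noteq> k \<longrightarrow> w (\<pi>!t) < w (\<pi>!Suc t)"
    "Suc k < L \<longrightarrow> w (\<pi>!k) = w (\<pi>!Suc k) \<and> lex_less ((shift^^Suc(\<pi>!k)) w) ((shift^^Suc(\<pi>!Suc k)) w)"
  shows "\<exists>\<omega>\<in>seq_space N. defines_pattern \<omega> \<pi>"
proof -
  have "defines_pattern w \<pi>"
    unfolding defines_pattern_def
  proof (intro allI impI)
    fix i assume i: "Suc i < length \<pi>"
    hence iL: "Suc i < L" using assms(1) by (simp add: perms_def)
    show "lex_less ((shift ^^ (\<pi> ! i)) w) ((shift ^^ (\<pi> ! Suc i)) w)"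
    proof (cases "i = k")
      case True thus ?thesis using assms(4) iL lex_step by blast
    next
      case False thus ?thesis using assms(3) iL lex_head by blast
    qed
  qed
  moreover have "w \<in> seq_space N" using assms(2) by (simp add: seq_space_def)
  ultimately show ?thesis by blast
qed

lemma wv_strict:
  assumes "\<pi> \<in> perms L"
  shows "\<forall>t. Suc t < L \<longrightarrow> t \<noteq> k \<longrightarrow> wv k L \<pi> c (\<pi>!t) < wv k L \<pi> c (\<pi>!Suc t)"
  using assms by (auto simp: wv_nth)

lemma wv_eq:
  assumes "\<pi> \<in> perms L" "Suc k < L"
  shows "wv k L \<pi> c (\<pi>!k) = wv k L \<pi> c (\<pi>!Suc k)"
  using assms by (auto simp: wv_nth)

lemma wv_bound:
  assumes "\<pi> \<in> perms L" "L = N + 1" "Suc k < L" "c < N"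
  shows "\<forall>m. wv k L \<pi> c m < N"
proof
  fix m show "wv k L \<pi> c m < N"
    using rk_lt[OF assms(1), of m] assms by (auto simp: wv_def)
qed

theorem proposition3:
  fixes N L :: nat
  assumes "N \<ge> 2" and "L \<le> N + 1"
  shows "\<forall>\<pi>\<in>perms L. \<exists>\<omega>\<in>seq_space N. defines_pattern \<omega> \<pi>"

proof
  fix \<pi> assume pi: "\<pi> \<in> perms L"
  have len: "length \<pi> = L" and dist: "distinct \<pi>" using pi by (auto simp: perms_def)
  have nthL: "\<And>t. t < L \<Longrightarrow> \<pi> ! t < L" using pi by (auto simp: perms_def)
  have inj: "\<And>s t. s < L \<Longrightarrow> t < L \<Longrightarrow> \<pi> ! s = \<pi> ! t \<Longrightarrow> s = t"
    using dist len by (simp add: nth_eq_iff_index_eq)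
  show "\<exists>\<omega>\<in>seq_space N. defines_pattern \<omega> \<pi>"
  proof (cases "L \<le> N")
    case True
    show ?thesis
    proof (rule realize[OF pi, of "wv L L \<pi> 0" N L])
      show "\<forall>m. wv L L \<pi> 0 m < N"
        using rk_lt[OF pi] True assms by (auto simp: wv_def) (meson less_le_trans, meson less_imp_diff_less order.strict_trans2)
      show "\<forall>t. Suc t < L \<longrightarrow> t \<noteq> L \<longrightarrow> wv L L \<pi> 0 (\<pi> ! t) < wv L L \<pi> 0 (\<pi> ! Suc t)"
        using wv_strict[OF pi] by blast
    qed simp
  next
    case False
    hence L: "L = N + 1" using assms by simp
    hence L3: "L \<ge> 3" using assms by simp
    define p where "p = rk \<pi> (L - 1)"
    have p: "p < L" "\<pi> ! p = L - 1" using rk_lt[OF pi, of "L - 1"] L3 by (auto simp: p_def)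
    have rkv: "\<And>m. m < L \<Longrightarrow> rk \<pi> m < L \<and> \<pi> ! rk \<pi> m = m" using rk_lt[OF pi] by blast
    show ?thesis
    proof (cases "1 \<le> p \<and> p \<le> L - 2")
      case True
      let ?w = "wv p L \<pi> 0"
      define j where "j = \<pi> ! Suc p"
      have sp: "Suc p < L" using True L3 by linarith
      have j: "j < L" "j \<noteq> L - 1" using nthL[of "Suc p"] inj[of p "Suc p"] p sp L3
        unfolding j_def by auto
      have "lex_less ((shift^^L) ?w) ((shift^^Suc j) ?w)"
      proof (rule lex_zero_tail[where n="L - 1 - Suc j"])
        show "\<forall>m\<ge>L. ?w m = 0" by (simp add: wv_def)
        have eq: "Suc j + (L - 1 - Suc j) = L - 1" using j by simp
        have wL: "?w (L - 1) = p" using wv_nth[OF pi, of p p 0] p by simp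
        show "?w (Suc j + (L - 1 - Suc j)) \<noteq> 0" by (simp only: eq wL) (use True in linarith)
      qed
      then show ?thesis
        using realize[OF pi wv_bound[OF pi L _ ] wv_strict[OF pi], of p 0] wv_eq[OF pi, of p 0] True L3 assms p j_def sp
        by (simp add: Suc_diff_Suc)
    next
      case False
      hence "p = 0 \<or> p = L - 1" using p by auto
      then show ?thesis
      proof
        assume p0: "p = 0"
        show ?thesis
        proof (cases "\<pi> ! 1 = L - 2")
          case False
          let ?w = "wv 0 L \<pi> 0"
          define j where "j = \<pi> ! Suc 0"
          have e0: "Suc (\<pi> ! 0) = L" using p p0 L3 by simp
          have j: "j < L" "j \<noteq> L - 1" "Suc j \<noteq> L - 1" using nthL[of 1] inj[of 0 1] p p0 False L3
            unfolding j_def by auto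
          define q where "q = rk \<pi> (Suc j)"
          have q: "q < L" "\<pi> ! q = Suc j" using rkv[of "Suc j"] j by (auto simp: q_def)
          have "q \<noteq> 0" by (rule notI) (use q p p0 j in simp)
          moreover have "q \<noteq> 1" using q j_def by auto
          ultimately have wq: "?w (Suc j) \<noteq> 0" using wv_rk[OF pi, of "Suc j" 0 0] q j by (simp add: q_def)
          have "lex_less ((shift^^L) ?w) ((shift^^Suc j) ?w)"
            by (rule lex_zero_tail[where n=0]) (use wq in \<open>auto simp: wv_def\<close>)
          then have lx: "lex_less ((shift^^Suc(\<pi>!(0))) ?w) ((shift^^Suc(\<pi>!Suc (0))) ?w)"
            by (simp only: e0 j_def[symmetric])
          have sk: "Suc (0) < L" using L3 by linarith
          have bd2: "\<forall>m. ?w m < N" by (rule wv_bound[OF pi L sk]) (use assms in simp)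
          show ?thesis
            by (rule realize[OF pi bd2 wv_strict[OF pi, of "0" "0"]]) (use wv_eq[OF pi sk, of "0"] lx in blast)
        next
          case True
          let ?w = "wv 1 L \<pi> 0"
          define j where "j = \<pi> ! Suc 1"
          have e1: "Suc (\<pi> ! 1) = Suc (L - 2)" using True by simp
          have p0': "\<pi> ! 0 = L - 1" using p p0 by simp
          have j1: "j < L" using nthL[of "Suc 1"] L3 unfolding j_def by simp
          have j2: "j \<noteq> L - 1"
          proof
            assume "j = L - 1"
            hence "Suc 1 = 0" using inj[of 0 "Suc 1"] p0' L3 unfolding j_def by simp
            thus False by simp
          qed
          have j3: "j \<noteq> L - 2"
          proof
            assume "j = L - 2"
            hence "Suc 1 = 1" using inj[of 1 "Suc 1"] True L3 unfolding j_def by simp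
            thus False by simp
          qed
          have j: "j < L" "j \<noteq> L - 1" "Suc j \<noteq> L - 1" using j1 j2 j3 by linarith+
          define q where "q = rk \<pi> (Suc j)"
          have q: "q < L" "\<pi> ! q = Suc j" using rkv[of "Suc j"] j by (auto simp: q_def)
          have "q \<noteq> 0" by (rule notI) (use q p p0 j in simp)
          hence wq: "?w (Suc j) \<noteq> 0" using wv_rk[OF pi, of "Suc j" 1 0] q j by (simp add: q_def)
          have w0: "?w (L - 1) = 0" using wv_nth[OF pi, of 0 1 0] p p0 by simp
          have "Suc (L - 2) = L - 1" using L3 by simp
          hence "lex_less ((shift^^Suc (L - 2)) ?w) ((shift^^Suc j) ?w)"
            using lex_head[of ?w "L - 1" "Suc j"] wq w0 by simp
          then have lx: "lex_less ((shift^^Suc(\<pi>!(1))) ?w) ((shift^^Suc(\<pi>!Suc (1))) ?w)"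
            by (simp only: e1 j_def[symmetric])
          have sk: "Suc (1) < L" using L3 by linarith
          have bd2: "\<forall>m. ?w m < N" by (rule wv_bound[OF pi L sk]) (use assms in simp)
          show ?thesis
            by (rule realize[OF pi bd2 wv_strict[OF pi, of "1" "0"]]) (use wv_eq[OF pi sk, of "0"] lx in blast)
        qed
      next
        assume pL: "p = L - 1"
        show ?thesis
        proof (cases "\<pi> ! (L - 2) = L - 2")
          case False
          let ?w = "wv (L - 2) L \<pi> (N - 1)"
          define i where "i = \<pi> ! (L - 2)"
          have e4: "Suc (\<pi> ! Suc (L - 2)) = L" using p pL L3 by (simp add: Suc_diff_Suc numeral_2_eq_2)
          have pl: "\<pi> ! (L - 1) = L - 1" using p pL by simp
          have i1: "i < L" using nthL[of "L - 2"] L3 unfolding i_def by simp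
          have i2: "i \<noteq> L - 1"
          proof
            assume "i = L - 1"
            hence "L - 2 = L - 1" using inj[of "L - 2" "L - 1"] pl L3 unfolding i_def by simp
            thus False using L3 by simp
          qed
          have i3: "i \<noteq> L - 2" using False unfolding i_def by simp
          have i: "i < L" "i \<noteq> L - 1" "Suc i < L - 1" using i1 i2 i3 by linarith+
          define q where "q = rk \<pi> (Suc i)"
          have q: "q < L" "\<pi> ! q = Suc i" using rkv[of "Suc i"] i by (auto simp: q_def)
          have "q \<noteq> L - 1" by (rule notI) (use q p pL i in simp)
          moreover have "q \<noteq> L - 2" using q i_def by auto
          ultimately have wq: "?w (Suc i) < N - 1" using wv_rk[OF pi, of "Suc i" "L - 2" "N - 1"] q i L
            by (simp add: q_def)
          have bd: "\<forall>m. ?w m < N" using wv_bound[OF pi L, of "L - 2" "N - 1"] L3 L by simp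
          have "lex_less ((shift^^Suc i) ?w) ((shift^^L) ?w)"
          proof (rule lex_max_tail[where n=0 and c="N - 1"])
            show "\<forall>m\<ge>L. ?w m = N - 1" by (simp add: wv_def)
            show "?w (Suc i + 0) < N - 1" using wq by simp
            show "\<forall>m. ?w m \<le> N - 1"
            proof
              fix m have "?w m < N" using bd by blast
              thus "?w m \<le> N - 1" by linarith
            qed
          qed
          then have lx: "lex_less ((shift^^Suc(\<pi>!(L - 2))) ?w) ((shift^^Suc(\<pi>!Suc (L - 2))) ?w)"
            by (simp only: e4 i_def[symmetric])
          have sk: "Suc (L - 2) < L" using L3 by linarith
          show ?thesis
            by (rule realize[OF pi bd wv_strict[OF pi, of "L - 2" "N - 1"]]) (use wv_eq[OF pi sk, of "N - 1"] lx in blast)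
        next
          case True
          let ?w = "wv (L - 3) L \<pi> 0"
          define i where "i = \<pi> ! (L - 3)"
          have e5: "\<pi> ! Suc (L - 3) = L - 2" using True L3 by (simp add: Suc_diff_Suc numeral_3_eq_3 numeral_2_eq_2)
          have pl: "\<pi> ! (L - 1) = L - 1" using p pL by simp
          have i1: "i < L" using nthL[of "L - 3"] L3 unfolding i_def by simp
          have i2: "i \<noteq> L - 1"
          proof
            assume "i = L - 1"
            hence "L - 3 = L - 1" using inj[of "L - 3" "L - 1"] pl L3 unfolding i_def by simp
            thus False using L3 by simp
          qed
          have i3: "i \<noteq> L - 2"
          proof
            assume "i = L - 2"
            hence "L - 3 = L - 2" using inj[of "L - 3" "L - 2"] True L3 unfolding i_def by simp
            thus False using L3 by simp
          qed
          have i: "i < L" "i \<noteq> L - 1" "Suc i < L" "Suc i \<noteq> L - 1" using i1 i2 i3 by linarith+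
          define q where "q = rk \<pi> (Suc i)"
          have q: "q < L" "\<pi> ! q = Suc i" using rkv[of "Suc i"] i by (auto simp: q_def)
          have "q \<noteq> L - 1" by (rule notI) (use q p pL i in simp)
          hence wq: "?w (Suc i) < L - 2" using wv_rk[OF pi, of "Suc i" "L - 3" 0] q i L3
            by (simp add: q_def; linarith)
          have w0: "?w (L - 1) = L - 2" using wv_nth[OF pi, of "L - 1" "L - 3" 0] L3 p pL by (simp; linarith)
          have e: "Suc (L - 2) = L - 1" "Suc (L - 3) = L - 2" using L3 by simp_all
          have "lex_less ((shift^^Suc i) ?w) ((shift^^Suc (L - 2)) ?w)"
            using lex_head[of ?w "Suc i" "L - 1"] wq w0 e by simp
          then have lx: "lex_less ((shift^^Suc(\<pi>!(L - 3))) ?w) ((shift^^Suc(\<pi>!Suc (L - 3))) ?w)"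
            by (simp only: e5 i_def[symmetric])
          have sk: "Suc (L - 3) < L" using L3 by linarith
          have bd2: "\<forall>m. ?w m < N" by (rule wv_bound[OF pi L sk]) (use assms in simp)
          show ?thesis
            by (rule realize[OF pi bd2 wv_strict[OF pi, of "L - 3" "0"]]) (use wv_eq[OF pi sk, of "0"] lx in blast)
        qed
      qed
    qed
  qed
qed

end
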